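(* Let $\mathcal F\subseteq 2^{[n]}$ and $K>0$. If $\lambda_{n-|F|}(\mathcal U(F))\le K$ for all $F\in\mathcal F$, then $\lambda_n(\mathcal F)\le K$.
   Context: For a family $\mathcal G$ of subsets of an $m$-element ground set, the Lubell mass is $\lambda_m(\mathcal G)=\sum_{G\in\mathcal G}\binom{m}{|G|}^{-1}$. For $F\in\mathcal F$, $\mathcal U(F)=\mathcal U_{\mathcal F}(F):=\{G\setminus F:\ G\in\mathcal F,\ F\subseteq G\}$, a family of subsets of the $(n-|F|)$-element set $[n]\setminus F$. *)

theory Defs
  imports Complex_Main
begin

definition lubell :: "nat \<Rightarrow> 'a set set \<Rightarrow> real" where
  "lubell m \<G> = (\<Sum>G\<in>\<G>. 1 / real (m choose card G))"

definition up_family :: "'a set set \<Rightarrow> 'a set \<Rightarrow> 'a set set" where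
  "up_family \<F> A = {G - A | G. G \<in> \<F> \<and> A \<subseteq> G}"

end

theory Submission
  imports Defs
begin

lemma up_up:
  assumes "x \<notin> H" "insert x H \<in> \<F>"
  shows "up_family (up_family \<F> {x}) H = up_family \<F> (insert x H)"
proof
  show "up_family (up_family \<F> {x}) H \<subseteq> up_family \<F> (insert x H)"
  proof
    fix A assume "A \<in> up_family (up_family \<F> {x}) H"
    then obtain G where G: "G \<in> \<F>" "x \<in> G" "H \<subseteq> G - {x}" "A = G - {x} - H"
      unfolding up_family_def by blast
    hence "A = G - insert x H" "insert x H \<subseteq> G" by auto
    thus "A \<in> up_family \<F> (insert x H)" using G(1) unfolding up_family_def by blast
  qed
next
  show "up_family \<F> (insert x H) \<subseteq> up_family (up_family \<F> {x}) H"
  proof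
    fix A assume "A \<in> up_family \<F> (insert x H)"
    then obtain G where G: "G \<in> \<F>" "insert x H \<subseteq> G" "A = G - insert x H"
      unfolding up_family_def by blast
    have "G - {x} \<in> up_family \<F> {x}" using G unfolding up_family_def by blast
    moreover have "H \<subseteq> G - {x}" "A = (G - {x}) - H" using G assms(1) by auto
    ultimately show "A \<in> up_family (up_family \<F> {x}) H" unfolding up_family_def by blast
  qed
qed

lemma identity:
  assumes fin: "finite S" and sub: "\<F> \<subseteq> Pow S" and ne: "{} \<notin> \<F>" and cS: "card S = Suc k"
  shows "lubell (card S) \<F> = (\<Sum>x\<in>S. lubell k (up_family \<F> {x})) / real (Suc k)"
proof -
  have finF: "finite \<F>" using finite_subset[OF sub] fin by simp
  have "lubell k (up_family \<F> {x}) = (\<Sum>G\<in>{G\<in>\<F>. x \<in> G}. 1 / real (k choose (card G - 1)))"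
    if "x \<in> S" for x
  proof -
    have eq: "up_family \<F> {x} = (\<lambda>G. G - {x}) ` {G\<in>\<F>. x \<in> G}"
      unfolding up_family_def by auto
    have inj: "inj_on (\<lambda>G. G - {x}) {G\<in>\<F>. x \<in> G}"
      by (rule inj_onI) (metis CollectD insert_Diff)
    have "lubell k (up_family \<F> {x}) = (\<Sum>G\<in>{G\<in>\<F>. x \<in> G}. 1 / real (k choose card (G - {x})))"
      unfolding lubell_def eq by (subst sum.reindex[OF inj]) simp
    also have "\<dots> = (\<Sum>G\<in>{G\<in>\<F>. x \<in> G}. 1 / real (k choose (card G - 1)))"
      apply (rule sum.cong, simp)
      using sub fin by (subst card_Diff_singleton) (auto intro: finite_subset)
    finally show ?thesis .
  qed
  hence "(\<Sum>x\<in>S. lubell k (up_family \<F> {x}))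
      = (\<Sum>x\<in>S. \<Sum>G\<in>{G\<in>\<F>. x \<in> G}. 1 / real (k choose (card G - 1)))" by simp
  also have "\<dots> = (\<Sum>G\<in>\<F>. \<Sum>x\<in>{x\<in>S. x \<in> G}. 1 / real (k choose (card G - 1)))"
    using sum.swap_restrict[OF fin finF, of "\<lambda>x G. 1 / real (k choose (card G - 1))" "\<lambda>x G. x \<in> G"]
    by simp
  also have "\<dots> = (\<Sum>G\<in>\<F>. real (card G) / real (k choose (card G - 1)))"
  proof (rule sum.cong, simp)
    fix G assume "G \<in> \<F>"
    hence "{x\<in>S. x \<in> G} = G" using sub by auto
    thus "(\<Sum>x\<in>{x\<in>S. x \<in> G}. 1 / real (k choose (card G - 1))) = real (card G) / real (k choose (card G - 1))"
      by simp
  qed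
  also have "\<dots> = (\<Sum>G\<in>\<F>. real (Suc k) / real (Suc k choose card G))"
  proof (rule sum.cong, simp)
    fix G assume G: "G \<in> \<F>"
    have fG: "finite G" using G sub fin by (auto intro: finite_subset)
    have "G \<noteq> {}" using G ne by auto
    hence "card G \<ge> 1" using fG by (simp add: Suc_le_eq card_gt_0_iff)
    then obtain j where j: "card G = Suc j" by (cases "card G") auto
    have le: "card G \<le> Suc k" using G sub fin cS card_mono by (metis PowD subsetD)
    have key: "real (Suc j) * real (Suc k choose Suc j) = real (Suc k) * real (k choose j)"
      using Suc_times_binomial_eq[of k j] by (metis of_nat_mult mult.commute)
    have p1: "real (k choose j) > 0" using le j by simp
    have p2: "real (Suc k choose Suc j) > 0" using le j zero_less_binomial_iff[of "Suc k" "Suc j"] by (simp del: binomial_Suc_Suc)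
    show "real (card G) / real (k choose (card G - 1)) = real (Suc k) / real (Suc k choose card G)"
      unfolding j using key p1 p2 by (simp add: field_simps)
  qed
  also have "\<dots> = real (Suc k) * lubell (card S) \<F>"
    unfolding lubell_def cS by (simp add: sum_distrib_left)
  finally show ?thesis by simp
qed

lemma main:
  "finite S \<Longrightarrow> card S = m \<Longrightarrow> \<F> \<subseteq> Pow S \<Longrightarrow> (K::real) \<ge> 0 \<Longrightarrow>
   \<forall>F\<in>\<F>. lubell (card S - card F) (up_family \<F> F) \<le> K \<Longrightarrow> lubell (card S) \<F> \<le> K"
proof (induction m arbitrary: S \<F>)
  case 0
  hence "S = {}" by auto
  hence "\<F> \<subseteq> {{}}" using 0 by auto
  show ?case
  proof (cases "{} \<in> \<F>")
    case True
    have "up_family \<F> {} = \<F>" unfolding up_family_def by auto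
    thus ?thesis using 0 True by force
  next
    case False
    hence "\<F> = {}" using \<open>\<F> \<subseteq> {{}}\<close> by auto
    thus ?thesis using 0 by (simp add: lubell_def)
  qed
next
  case (Suc k)
  show ?case
  proof (cases "{} \<in> \<F>")
    case True
    have "up_family \<F> {} = \<F>" unfolding up_family_def by auto
    thus ?thesis using Suc True by force
  next
    case False
    have bound: "lubell k (up_family \<F> {x}) \<le> K" if x: "x \<in> S" for x
    proof -
      have c: "card (S - {x}) = k" using Suc x by simp
      have s: "up_family \<F> {x} \<subseteq> Pow (S - {x})" using Suc.prems(3) unfolding up_family_def by auto
      have "\<forall>H\<in>up_family \<F> {x}. lubell (card (S - {x}) - card H) (up_family (up_family \<F> {x}) H) \<le> K"
      proof
        fix H assume H: "H \<in> up_family \<F> {x}"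
        then obtain G where G: "G \<in> \<F>" "x \<in> G" "H = G - {x}" unfolding up_family_def by auto
        have xH: "x \<notin> H" and iG: "insert x H = G" using G by auto
        have fG: "finite G" using G Suc.prems(1,3) by (auto intro: finite_subset)
        have "card G = Suc (card H)" using xH iG fG by (metis card_insert_disjoint finite_insert)
        hence "card (S - {x}) - card H = card S - card G" using c Suc.prems(2) by simp
        thus "lubell (card (S - {x}) - card H) (up_family (up_family \<F> {x}) H) \<le> K"
          using up_up[OF xH, of \<F>] iG G(1) Suc.prems(5) by simp
      qed
      from Suc.IH[OF _ c s Suc.prems(4) this] Suc.prems(1) c show ?thesis by simp
    qed
    have "lubell (card S) \<F> = (\<Sum>x\<in>S. lubell k (up_family \<F> {x})) / real (Suc k)"
      using identity[OF Suc.prems(1,3) False] Suc.prems(2) by simp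
    also have "\<dots> \<le> (\<Sum>x\<in>S. K) / real (Suc k)"
      by (rule divide_right_mono, rule sum_mono, rule bound, auto)
    also have "\<dots> = K" using Suc.prems(2) by simp
    finally show ?thesis .
  qed
qed

theorem proposition2p2:
  fixes n :: nat and \<F> :: "nat set set" and K :: real
  assumes "\<F> \<subseteq> Pow {1..n}"
    and "K > 0"
    and "\<forall>F\<in>\<F>. lubell (n - card F) (up_family \<F> F) \<le> K"
  shows "lubell n \<F> \<le> K"
  using main[of "{1..n}" n \<F> K] assms by simp

end
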